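(* For real numbers $\epsilon_1,\epsilon_2\ge 0$ let \[ D_{\epsilon_1,\epsilon_2}=\begin{bmatrix}0&4&0\\2&0&4+\epsilon_1\\3&2+\epsilon_2&0\end{bmatrix}. \] There exists $\delta>0$ such that for all $\epsilon_1,\epsilon_2,\epsilon_1',\epsilon_2'\in[0,\delta]$, the bimatrix game $(D_{\epsilon_1,\epsilon_2},D_{\epsilon_1',\epsilon_2'}^T)$ has exactly one Nash equilibrium; this equilibrium has full support (both players assign positive probability to all three pure strategies); and if $(\epsilon_1,\epsilon_2)=(\epsilon_1',\epsilon_2')$ then this equilibrium is symmetric.
   Context: A bimatrix game $(A,B)$ with $m\times n$ real payoff matrices: the first player chooses a mixed strategy $\mathbf{x}\in\Delta_m=\{\mathbf{x}\in\mathbb{R}^m:\mathbf{x}\ge 0,\sum_i x_i=1\}$, the second $\mathbf{y}\in\Delta_n$; payoffs are $\mathbf{x}^TA\mathbf{y}$ and $\mathbf{x}^TB\mathbf{y}$. $(\mathbf{x},\mathbf{y})$ is a Nash equilibrium (NE) if neither player can increase her payoff by unilaterally changing her mixed strategy. A NE $(\mathbf{x},\mathbf{y})$ is symmetric if $\mathbf{x}=\mathbf{y}$. *)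

theory Defs
  imports "HOL-Analysis.Analysis"
begin

definition mixed_strategies :: "(real ^ 'n) set" where
  "mixed_strategies = {x. (\<forall>i. 0 \<le> x $ i) \<and> (\<Sum>i\<in>UNIV. x $ i) = 1}"

definition nash_equilibrium ::
  "real ^ 'n ^ 'm \<Rightarrow> real ^ 'n ^ 'm \<Rightarrow> real ^ 'm \<Rightarrow> real ^ 'n \<Rightarrow> bool" where
  "nash_equilibrium A B x y \<longleftrightarrow>
     x \<in> mixed_strategies \<and> y \<in> mixed_strategies \<and>
     (\<forall>x'\<in>mixed_strategies. x' \<bullet> (A *v y) \<le> x \<bullet> (A *v y)) \<and>
     (\<forall>y'\<in>mixed_strategies. x \<bullet> (B *v y') \<le> x \<bullet> (B *v y))"

definition D :: "real \<Rightarrow> real \<Rightarrow> real ^ 3 ^ 3" where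
  "D e1 e2 = vector [vector [0, 4, 0],
                     vector [2, 0, 4 + e1],
                     vector [3, 2 + e2, 0]]"

end

theory Submission
  imports Defs
begin

definition SS :: "real \<Rightarrow> real \<Rightarrow> real" where
  "SS p q = (5-q)*(4+p)+8+2*q"

definition zv :: "real \<Rightarrow> real \<Rightarrow> real ^ 3" where
  "zv p q = vector [(2-q)*(4+p)/SS p q, 3*(4+p)/SS p q, (8+2*q)/SS p q]"

lemma SS_pos: "0 \<le> p \<Longrightarrow> p \<le> 1 \<Longrightarrow> 0 \<le> q \<Longrightarrow> q \<le> 1 \<Longrightarrow> SS p q > 0"
  unfolding SS_def by (smt (verit) mult_nonneg_nonneg)

lemma zv_comp: "zv p q $ 1 = (2-q)*(4+p)/SS p q" "zv p q $ 2 = 3*(4+p)/SS p q"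
  "zv p q $ 3 = (8+2*q)/SS p q"
  by (simp_all add: zv_def)

lemma core_lin:
  fixes x1 x2 x3 y1 y2 y3 a b c d v w :: real
  assumes "x1 \<ge> 0" "x2 \<ge> 0" "x3 \<ge> 0" "x1+x2+x3 = 1"
    "y1 \<ge> 0" "y2 \<ge> 0" "y3 \<ge> 0" "y1+y2+y3 = 1"
    "0 \<le> a" "a \<le> y3/100" "0 \<le> b" "b \<le> y2/100"
    "0 \<le> c" "c \<le> x3/100" "0 \<le> d" "d \<le> x2/100"
    "4*y2 \<le> v" "2*y1+4*y3+a \<le> v" "3*y1+2*y2+b \<le> v"
    "x1 = 0 \<or> 4*y2 = v" "x2 = 0 \<or> 2*y1+4*y3+a = v" "x3 = 0 \<or> 3*y1+2*y2+b = v"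
    "4*x2 \<le> w" "2*x1+4*x3+c \<le> w" "3*x1+2*x2+d \<le> w"
    "y1 = 0 \<or> 4*x2 = w" "y2 = 0 \<or> 2*x1+4*x3+c = w" "y3 = 0 \<or> 3*x1+2*x2+d = w"
  shows "x1 > 0 \<and> x2 > 0 \<and> x3 > 0 \<and> y1 > 0 \<and> y2 > 0 \<and> y3 > 0"
proof -
  have "x1 > 0" using assms by (elim disjE; linarith)
  moreover have "x2 > 0" using assms by (elim disjE; linarith)
  moreover have "x3 > 0" using assms by (elim disjE; linarith)
  moreover have "y1 > 0" using assms by (elim disjE; linarith)
  moreover have "y2 > 0" using assms by (elim disjE; linarith)
  moreover have "y3 > 0" using assms by (elim disjE; linarith)
  ultimately show ?thesis by blast
qed

lemma solve_eq:
  fixes y1 y2 y3 p q :: real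
  assumes "0\<le>p" "p\<le>1/100" "0\<le>q" "q\<le>1/100" "4*y2 = 2*y1+(4+p)*y3" "4*y2 = 3*y1+(2+q)*y2"
    "y1+y2+y3=1"
  shows "y1 = (2-q)*(4+p)/SS p q \<and> y2 = 3*(4+p)/SS p q \<and> y3 = (8+2*q)/SS p q"
proof -
  have S: "SS p q > 0" using assms by (intro SS_pos) auto
  have h1: "3*y1 = (2-q)*y2" using assms(6) by (simp add: algebra_simps)
  have h2: "3*(4+p)*y3 = (8+2*q)*y2"
  proof -
    have "(4+p)*y3 = 4*y2 - 2*y1" using assms(5) by simp
    have "3*(4+p)*y3 = 3*((4+p)*y3)" by (simp add: mult.assoc)
    also have "\<dots> = 3*(4*y2 - 2*y1)" using \<open>(4+p)*y3 = 4*y2 - 2*y1\<close> by simp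
    also have "\<dots> = 12*y2 - 2*(3*y1)" by simp
    also have "\<dots> = 12*y2 - 2*((2-q)*y2)" using h1 by simp
    also have "\<dots> = (8+2*q)*y2" by (simp add: algebra_simps)
    finally show ?thesis .
  qed
  have h1': "(4+p)*(3*y1) = (4+p)*((2-q)*y2)" using h1 by simp
  have h3: "SS p q * y2 = 3*(4+p)"
  proof -
    have "SS p q * y2 = (4+p)*((2-q)*y2) + 3*(4+p)*y2 + (8+2*q)*y2"
      unfolding SS_def by (simp add: algebra_simps)
    also have "\<dots> = (4+p)*(3*y1) + 3*(4+p)*y2 + 3*(4+p)*y3" by (simp only: h1' h2)
    also have "\<dots> = 3*(4+p)*(y1+y2+y3)" by (simp add: algebra_simps)
    finally show ?thesis using assms(7) by simp
  qed
  have e2: "y2 = 3*(4+p)/SS p q" using h3 S by (simp add: field_simps)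
  have e1: "y1 = (2-q)*(4+p)/SS p q" using h1 e2 S by (simp add: field_simps)
  have y3e: "y3 = 1 - y1 - y2" using assms(7) by simp
  have "y3 * SS p q = SS p q - y1 * SS p q - y2 * SS p q" unfolding y3e by (simp add: algebra_simps)
  also have "\<dots> = SS p q - (2-q)*(4+p) - 3*(4+p)" using e1 e2 S by simp
  also have "\<dots> = 8+2*q" by (simp add: SS_def algebra_simps)
  finally have e3: "y3 = (8+2*q)/SS p q" using S by (simp add: field_simps)
  show ?thesis using e1 e2 e3 by blast
qed


lemma div_comb: "k1*(a/S) + k2*(b/(S::real)) = (k1*a+k2*b)/S"
  by (simp add: add_divide_distrib)

lemma div_comb1: "k1*(a/(S::real)) = (k1*a)/S"
  by simp

lemma Dmv: "(D e1 e2 *v y) $ 1 = 4*y$2" "(D e1 e2 *v y) $ 2 = 2*y$1 + (4+e1)*y$3"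
  "(D e1 e2 *v y) $ 3 = 3*y$1 + (2+e2)*y$2"
  by (simp_all add: D_def matrix_vector_mult_def sum_3)

lemma inner3: "(x::real^3) \<bullet> y = x$1*y$1 + x$2*y$2 + x$3*y$3"
  by (simp add: inner_vec_def sum_3)

lemma transp_inner: "(x::real^3) \<bullet> (transpose (M::real^3^3) *v y) = y \<bullet> (M *v x)"
  by (simp add: inner_vec_def matrix_vector_mult_def transpose_def sum_3 algebra_simps)

lemma ms3: "(x::real^3) \<in> mixed_strategies \<longleftrightarrow> x$1 \<ge> 0 \<and> x$2 \<ge> 0 \<and> x$3 \<ge> 0 \<and> x$1+x$2+x$3 = 1"
  by (simp add: mixed_strategies_def forall_3 sum_3)

lemma basis_ms: "(vector [1,0,0]::real^3) \<in> mixed_strategies"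
  "(vector [0,1,0]::real^3) \<in> mixed_strategies" "(vector [0,0,1]::real^3) \<in> mixed_strategies"
  by (simp_all add: ms3)

lemma basis_inner: "(vector [1,0,0]::real^3) \<bullet> u = u$1"
  "(vector [0,1,0]::real^3) \<bullet> u = u$2" "(vector [0,0,1]::real^3) \<bullet> u = u$3"
  by (simp_all add: inner3)

lemma compl_slack:
  fixes x1 x2 x3 u1 u2 u3 :: real
  assumes "x1 \<ge> 0" "x2 \<ge> 0" "x3 \<ge> 0" "x1+x2+x3 = 1"
    "u1 \<le> t" "u2 \<le> t" "u3 \<le> t" "t = x1*u1+x2*u2+x3*u3"
  shows "x1 = 0 \<or> u1 = t" "x2 = 0 \<or> u2 = t" "x3 = 0 \<or> u3 = t"
proof -
  have t1: "x1*(t-u1) \<ge> 0" "x2*(t-u2) \<ge> 0" "x3*(t-u3) \<ge> 0" using assms by simp_all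
  have "x1*(t-u1) + x2*(t-u2) + x3*(t-u3) = (x1+x2+x3)*t - (x1*u1+x2*u2+x3*u3)"
    by (simp add: algebra_simps)
  hence z: "x1*(t-u1) + x2*(t-u2) + x3*(t-u3) = 0" using assms by simp
  have "x1*(t-u1) = 0" "x2*(t-u2) = 0" "x3*(t-u3) = 0" using t1 z by linarith+
  thus "x1 = 0 \<or> u1 = t" "x2 = 0 \<or> u2 = t" "x3 = 0 \<or> u3 = t" by auto
qed

lemma ne_char:
  assumes "0 \<le> e1" "e1 \<le> 1/100" "0 \<le> e2" "e2 \<le> 1/100"
    "0 \<le> f1" "f1 \<le> 1/100" "0 \<le> f2" "f2 \<le> 1/100"
  shows "nash_equilibrium (D e1 e2) (transpose (D f1 f2)) x y \<longleftrightarrow> x = zv f1 f2 \<and> y = zv e1 e2"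
proof
  assume ne: "nash_equilibrium (D e1 e2) (transpose (D f1 f2)) x y"
  define u where "u = D e1 e2 *v y"
  define w where "w = D f1 f2 *v x"
  have xm: "x \<in> mixed_strategies" and ym: "y \<in> mixed_strategies"
    and rx: "\<And>x'. x' \<in> mixed_strategies \<Longrightarrow> x' \<bullet> u \<le> x \<bullet> u"
    and ry: "\<And>y'. y' \<in> mixed_strategies \<Longrightarrow> y' \<bullet> w \<le> y \<bullet> w"
    using ne unfolding nash_equilibrium_def u_def w_def transp_inner by auto
  have X: "x$1 \<ge> 0" "x$2 \<ge> 0" "x$3 \<ge> 0" "x$1+x$2+x$3 = 1" using xm ms3 by auto
  have Y: "y$1 \<ge> 0" "y$2 \<ge> 0" "y$3 \<ge> 0" "y$1+y$2+y$3 = 1" using ym ms3 by auto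
  have U: "u$1 \<le> x \<bullet> u" "u$2 \<le> x \<bullet> u" "u$3 \<le> x \<bullet> u"
    using rx[OF basis_ms(1)] rx[OF basis_ms(2)] rx[OF basis_ms(3)] by (simp_all add: basis_inner)
  have W: "w$1 \<le> y \<bullet> w" "w$2 \<le> y \<bullet> w" "w$3 \<le> y \<bullet> w"
    using ry[OF basis_ms(1)] ry[OF basis_ms(2)] ry[OF basis_ms(3)] by (simp_all add: basis_inner)
  note CU = compl_slack[OF X U inner3]
  note CW = compl_slack[OF Y W inner3]
  have ue: "u$1 = 4*y$2" "u$2 = 2*y$1+4*y$3+e1*y$3" "u$3 = 3*y$1+2*y$2+e2*y$2"
    unfolding u_def Dmv by (simp_all add: algebra_simps)
  have we: "w$1 = 4*x$2" "w$2 = 2*x$1+4*x$3+f1*x$3" "w$3 = 3*x$1+2*x$2+f2*x$2"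
    unfolding w_def Dmv by (simp_all add: algebra_simps)
  have b1: "e1*y$3 \<le> y$3/100" using mult_right_mono[OF assms(2) Y(3)] by simp
  have b2: "e2*y$2 \<le> y$2/100" using mult_right_mono[OF assms(4) Y(2)] by simp
  have b3: "f1*x$3 \<le> x$3/100" using mult_right_mono[OF assms(6) X(3)] by simp
  have b4: "f2*x$2 \<le> x$2/100" using mult_right_mono[OF assms(8) X(2)] by simp
  have pos: "x$1 > 0 \<and> x$2 > 0 \<and> x$3 > 0 \<and> y$1 > 0 \<and> y$2 > 0 \<and> y$3 > 0"
    apply (rule core_lin[OF X Y _ b1 _ b2 _ b3 _ b4])
    using U W CU CW ue we assms X Y by simp_all
  have eu: "4*y$2 = 2*y$1+(4+e1)*y$3" "4*y$2 = 3*y$1+(2+e2)*y$2"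
    using CU pos ue by (simp_all add: algebra_simps)
  have ew: "4*x$2 = 2*x$1+(4+f1)*x$3" "4*x$2 = 3*x$1+(2+f2)*x$2"
    using CW pos we by (simp_all add: algebra_simps)
  have "y = zv e1 e2"
    using solve_eq[OF assms(1-4) eu Y(4)] by (simp add: vec_eq_iff forall_3 zv_comp)
  moreover have "x = zv f1 f2"
    using solve_eq[OF assms(5-8) ew X(4)] by (simp add: vec_eq_iff forall_3 zv_comp)
  ultimately show "x = zv f1 f2 \<and> y = zv e1 e2" by blast
next
  assume h: "x = zv f1 f2 \<and> y = zv e1 e2"
  have zm: "zv p q \<in> mixed_strategies" if "0 \<le> p" "p \<le> 1" "0 \<le> q" "q \<le> 1" for p q
  proof -
    have S: "SS p q > 0" using SS_pos that by blast
    have n: "(2-q)*(4+p) + 3*(4+p) + (8+2*q) = SS p q" by (simp add: SS_def algebra_simps)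
    have "(2-q)*(4+p)/SS p q + 3*(4+p)/SS p q + (8+2*q)/SS p q
        = ((2-q)*(4+p) + 3*(4+p) + (8+2*q))/SS p q" by (simp add: add_divide_distrib)
    also have "\<dots> = 1" using S n by simp
    finally have sm: "(2-q)*(4+p)/SS p q + 3*(4+p)/SS p q + (8+2*q)/SS p q = 1" .
    have "(2-q)*(4+p)/SS p q \<ge> 0" "3*(4+p)/SS p q \<ge> 0" "(8+2*q)/SS p q \<ge> 0"
      using S that by (simp_all add: divide_nonneg_pos)
    thus ?thesis unfolding ms3 zv_comp using sm by simp
  qed
  have const: "\<exists>c. \<forall>i. (M *v zv p q) $ i = c" if "M = D p q" "0 \<le> p" "p \<le> 1" "0 \<le> q" "q \<le> 1" for M p q
  proof -
    have S: "SS p q > 0" using SS_pos that(2-) by blast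
    have "(M *v zv p q) $ 1 = 12*(4+p)/SS p q" "(M *v zv p q) $ 2 = 12*(4+p)/SS p q"
      "(M *v zv p q) $ 3 = 12*(4+p)/SS p q"
      unfolding that(1) Dmv zv_comp by (simp_all add: div_comb div_comb1 algebra_simps add_divide_distrib[symmetric])
    thus ?thesis using exhaust_3 by metis
  qed
  have sumc: "z \<bullet> (\<chi> i. c) = c" if "z \<in> mixed_strategies" for z :: "real^3" and c
  proof -
    have "z \<bullet> (\<chi> i. c) = (z$1+z$2+z$3)*c" by (simp add: inner3 distrib_right)
    thus ?thesis using that unfolding ms3 by simp
  qed
  have l: "e1 \<le> 1" "e2 \<le> 1" "f1 \<le> 1" "f2 \<le> 1" using assms by linarith+
  obtain c1 where c1: "\<forall>i. (D e1 e2 *v zv e1 e2) $ i = c1"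
    using const[OF refl assms(1) l(1) assms(3) l(2)] by blast
  obtain c2 where c2: "\<forall>i. (D f1 f2 *v zv f1 f2) $ i = c2"
    using const[OF refl assms(5) l(3) assms(7) l(4)] by blast
  have hx: "x = zv f1 f2" and hy: "y = zv e1 e2" using h by auto
  have u: "D e1 e2 *v y = (\<chi> i. c1)" using c1 unfolding hy by (simp add: vec_eq_iff)
  have w: "D f1 f2 *v x = (\<chi> i. c2)" using c2 unfolding hx by (simp add: vec_eq_iff)
  have xm: "x \<in> mixed_strategies" unfolding hx using zm[OF assms(5) l(3) assms(7) l(4)] .
  have ym: "y \<in> mixed_strategies" unfolding hy using zm[OF assms(1) l(1) assms(3) l(2)] .
  show "nash_equilibrium (D e1 e2) (transpose (D f1 f2)) x y"
    unfolding nash_equilibrium_def transp_inner u w using xm ym sumc[OF xm] sumc[OF ym] sumc by auto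
qed

lemma main_case:
  assumes b: "0 \<le> e1" "e1 \<le> 1/100" "0 \<le> e2" "e2 \<le> 1/100"
    "0 \<le> e1'" "e1' \<le> 1/100" "0 \<le> e2'" "e2' \<le> 1/100"
  shows "(\<exists>!(x, y). nash_equilibrium (D e1 e2) (transpose (D e1' e2')) x y) \<and>
     (\<forall>x y. nash_equilibrium (D e1 e2) (transpose (D e1' e2')) x y \<longrightarrow>
        (\<forall>i. x $ i > 0) \<and> (\<forall>j. y $ j > 0) \<and>
        ((e1, e2) = (e1', e2') \<longrightarrow> x = y))"
proof -
  note C = ne_char[OF b]
  have zpos: "zv p q $ i > 0" if "0 \<le> p" "p \<le> 1/100" "0 \<le> q" "q \<le> 1/100" for p q i
  proof -
    have S: "SS p q > 0" using SS_pos that by simp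
    have "zv p q $ 1 > 0" "zv p q $ 2 > 0" "zv p q $ 3 > 0"
      unfolding zv_comp using S that by (simp_all add: divide_pos_pos)
    thus ?thesis by (metis exhaust_3)
  qed
  have A: "\<exists>!(x, y). nash_equilibrium (D e1 e2) (transpose (D e1' e2')) x y"
    unfolding C by (rule ex1I[of _ "(zv e1' e2', zv e1 e2)"]) auto
  have B: "(\<forall>i. x $ i > 0) \<and> (\<forall>j. y $ j > 0) \<and> ((e1, e2) = (e1', e2') \<longrightarrow> x = y)"
    if ne: "nash_equilibrium (D e1 e2) (transpose (D e1' e2')) x y" for x y
  proof -
    have xy: "x = zv e1' e2'" "y = zv e1 e2" using C ne by auto
    show ?thesis using xy zpos b by simp
  qed
  show ?thesis using A B by blast
qed

theorem lemma3p2: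
  shows "\<exists>\<delta>>0. \<forall>e1 e2 e1' e2'.
     e1 \<in> {0..\<delta>} \<and> e2 \<in> {0..\<delta>} \<and> e1' \<in> {0..\<delta>} \<and> e2' \<in> {0..\<delta>} \<longrightarrow>
     (\<exists>!(x, y). nash_equilibrium (D e1 e2) (transpose (D e1' e2')) x y) \<and>
     (\<forall>x y. nash_equilibrium (D e1 e2) (transpose (D e1' e2')) x y \<longrightarrow>
        (\<forall>i. x $ i > 0) \<and> (\<forall>j. y $ j > 0) \<and>
        ((e1, e2) = (e1', e2') \<longrightarrow> x = y))"
proof -
  show ?thesis
    apply (rule exI[of _ "1/100"])
    apply (rule conjI)
     apply simp
    apply (intro allI impI)
    apply (rule main_case)
    by auto
qed

end
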